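(* Let $A=\mathrm{diag}(2,3,5)$ and $B=(1,2,1)$, and let $\mathrm{NT}=\{(x_1,x_2,x_3)\in\mathbb{R}^3 : BA^k(x_1,x_2,x_3)^T\ge 0 \text{ for all integers } k\ge 0\}=\{\vec{x}: 2^kx_1+2\cdot 3^kx_2+5^kx_3\ge 0\ \forall k\ge 0\}$, the non-termination set of the loop "while $(x_1+2x_2+x_3\ge 0)$ $\{(x_1,x_2,x_3):=(2x_1,3x_2,5x_3)\}$". Then $\mathrm{NT}$ is not a semi-algebraic set.
   Context: A semi-algebraic subset of $\mathbb{R}^n$ is a set of the form $\bigcup_{i=1}^s\bigcap_{j=1}^{r_i}\{\vec{x}\in\mathbb{R}^n: f_{i,j}(\vec{x})\,\triangleleft_{i,j}\,0\}$ with finitely many polynomials $f_{i,j}\in\mathbb{R}[x_1,\dots,x_n]$ and $\triangleleft_{i,j}\in\{<,=\}$. *)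

theory Defs
  imports "HOL-Analysis.Analysis"
begin

definition poly_fun3 :: "(real^3 \<Rightarrow> real) \<Rightarrow> bool" where
  "poly_fun3 f \<longleftrightarrow> (\<exists>(c :: nat \<Rightarrow> nat \<Rightarrow> nat \<Rightarrow> real) (N :: nat).
     \<forall>x. f x = (\<Sum>i\<le>N. \<Sum>j\<le>N. \<Sum>k\<le>N. c i j k * (x$1)^i * (x$2)^j * (x$3)^k))"

datatype sign_rel = Less0 | Eq0

fun holds_rel :: "sign_rel \<Rightarrow> real \<Rightarrow> bool" where
  "holds_rel Less0 v \<longleftrightarrow> v < 0"
| "holds_rel Eq0 v \<longleftrightarrow> v = 0"

definition semialgebraic3 :: "(real^3) set \<Rightarrow> bool" where
  "semialgebraic3 S \<longleftrightarrow> (\<exists>F :: ((real^3 \<Rightarrow> real) \<times> sign_rel) list list.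
     (\<forall>C\<in>set F. \<forall>(f, r)\<in>set C. poly_fun3 f) \<and>
     S = {x. \<exists>C\<in>set F. \<forall>(f, r)\<in>set C. holds_rel r (f x)})"

definition NT :: "(real^3) set" where
  "NT = {x. \<forall>k::nat. 2^k * x$1 + 2 * 3^k * x$2 + 5^k * x$3 \<ge> (0::real)}"

end

theory Submission
  imports Defs "HOL-Computational_Algebra.Polynomial"
begin

definition qv :: "nat \<Rightarrow> real^3" where
  "qv k = vector [1, -(3/4)*(2/3)^k, (1/2)*(2/5)^k]"

definition vl :: "nat \<Rightarrow> real^3 \<Rightarrow> real" where
  "vl m x = 2^m * x$1 + 2*3^m*x$2 + 5^m*x$3"

definition e3 :: "real^3" where "e3 = vector [0,0,1]"

definition Ed :: "nat \<Rightarrow> real \<Rightarrow> real^3" where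
  "Ed k s = qv k + s *\<^sub>R (qv (Suc k) - qv k)"

lemma NT_iff: "x \<in> NT \<longleftrightarrow> (\<forall>m. 0 \<le> vl m x)"
  by (simp add: NT_def vl_def)

lemma vl_add: "vl m (x + y) = vl m x + vl m y"
  by (simp add: vl_def algebra_simps)
lemma vl_diff: "vl m (x - y) = vl m x - vl m y"
  by (simp add: vl_def algebra_simps)
lemma vl_scale: "vl m (c *\<^sub>R x) = c * vl m x"
  by (simp add: vl_def algebra_simps)
lemma vl_e3: "vl m e3 = 5^m"
  by (simp add: vl_def e3_def)

lemma ineq1: "3*3^u \<le> 2*2^u + (5::real)^u"
proof (induction u)
  case 0 then show ?case by simp
next
  case (Suc u)
  have "(2::real)^u \<le> 3^u" by (rule power_mono) auto
  then show ?case using Suc by simp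
qed

lemma ineq2: "3*10^w \<le> 2*15^w + (6::real)^w"
proof (induction w)
  case 0 then show ?case by simp
next
  case (Suc w)
  have "(6::real)^w \<le> 10^w" by (rule power_mono) auto
  moreover have "(0::real) \<le> 6^w" by simp
  ultimately show ?case unfolding power_Suc using Suc by linarith
qed

lemma vl_q_scaled: "2*15^k * vl m (qv k) = 2*2^m*15^k - 3*3^m*10^k + 5^m*(6::real)^k"
proof -
  have a: "(15::real)^k * (2/3)^k = 10^k" by (simp add: power_mult_distrib[symmetric])
  have b: "(15::real)^k * (2/5)^k = 6^k" by (simp add: power_mult_distrib[symmetric])
  have "2*15^k * vl m (qv k) = 2*2^m*15^k - 3*3^m*(15^k * (2/3)^k) + 5^m*(15^k*(2/5)^k)"
    by (simp add: vl_def qv_def algebra_simps)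
  then show ?thesis using a b by simp
qed

lemma pw: "(6::real)^k = 2^k*3^k" "(10::real)^k = 2^k*5^k" "(15::real)^k = 3^k*5^k" "(30::real)^k = 2^k*3^k*5^k"
  by (simp_all add: power_mult_distrib[symmetric])

lemma p30: "(2::real)^k * 15^k = 30^k" "(3::real)^k * 10^k = 30^k" "(5::real)^k * 6^k = 30^k"
  by (simp_all add: power_mult_distrib[symmetric])

lemma vl_q_nonneg: "0 \<le> vl m (qv k)"
proof -
  have key: "3*3^m*10^k \<le> 2*2^m*15^k + 5^m*(6::real)^k"
  proof (cases "k \<le> m")
    case True
    then obtain u where m: "m = k + u" using le_Suc_ex by blast
    have e1: "3*3^m*10^k = (30::real)^k * (3*3^u)"
      by (simp add: m power_add pw algebra_simps)
    have e2: "2*2^m*15^k + 5^m*(6::real)^k = 30^k * (2*2^u + 5^u)"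
      by (simp add: m power_add pw algebra_simps)
    have "(30::real)^k * (3*3^u) \<le> 30^k * (2*2^u + 5^u)"
      by (rule mult_left_mono[OF ineq1]) simp
    then show ?thesis unfolding e1 e2 .
  next
    case False
    then obtain w where k: "k = m + w" using le_Suc_ex[of m k] by auto
    have e1: "3*3^m*10^k = (30::real)^m * (3*10^w)"
      by (simp add: k power_add pw algebra_simps)
    have e2: "2*2^m*15^k + 5^m*(6::real)^k = 30^m * (2*15^w + 6^w)"
      by (simp add: k power_add pw algebra_simps)
    have "(30::real)^m * (3*10^w) \<le> 30^m * (2*15^w + 6^w)"
      by (rule mult_left_mono[OF ineq2]) simp
    then show ?thesis unfolding e1 e2 .
  qed
  have "0 \<le> 2*15^k * vl m (qv k)" using key vl_q_scaled[of k m] by simp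
  moreover have "(0::real) < 15^k" by simp
  ultimately show ?thesis by (simp add: zero_le_mult_iff)
qed

lemma vl_q_zero1: "vl k (qv k) = 0"
  using vl_q_scaled[of k k] p30[of k] by (simp add: algebra_simps)

lemma vl_q_zero2: "vl (Suc k) (qv k) = 0"
  using vl_q_scaled[of k "Suc k"] p30[of k] by (simp add: algebra_simps)

lemma vl_Ed: "vl m (Ed k s) = (1 - s) * vl m (qv k) + s * vl m (qv (Suc k))"
  by (simp add: Ed_def vl_add vl_diff vl_scale algebra_simps)

lemma Ed_in: "0 \<le> s \<Longrightarrow> s \<le> 1 \<Longrightarrow> Ed k s \<in> NT"
  unfolding NT_iff vl_Ed using vl_q_nonneg by (simp add: add_nonneg_nonneg mult_nonneg_nonneg)

lemma Ed_out: "0 < t \<Longrightarrow> Ed k s - t *\<^sub>R e3 \<notin> NT"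
proof -
  assume t: "0 < t"
  have "vl (Suc k) (Ed k s - t *\<^sub>R e3) = - t * 5^Suc k"
    by (simp add: vl_diff vl_scale vl_e3 vl_Ed vl_q_zero1 vl_q_zero2 del: power_Suc)
  also have "\<dots> < 0" using t by simp
  finally show ?thesis unfolding NT_iff by (auto simp: not_le)
qed

lemma poly_line:
  assumes "poly_fun3 f"
  shows "\<exists>P. \<forall>t. f (a + t *\<^sub>R b) = poly P t"
proof -
  obtain c N where cN: "\<forall>x. f x = (\<Sum>i\<le>N. \<Sum>j\<le>N. \<Sum>k\<le>N. c i j k * (x$1)^i * (x$2)^j * (x$3)^k)"
    using assms unfolding poly_fun3_def by blast
  define P where "P = (\<Sum>i\<le>N. \<Sum>j\<le>N. \<Sum>k\<le>N. smult (c i j k)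
      ([:a$1, b$1:]^i * [:a$2, b$2:]^j * [:a$3, b$3:]^k))"
  have "\<forall>t. f (a + t *\<^sub>R b) = poly P t"
    by (simp add: cN P_def poly_sum mult.assoc algebra_simps)
  then show ?thesis by blast
qed

lemma poly_zero:
  fixes g :: "real \<Rightarrow> real" and P :: "real poly"
  assumes "\<forall>t. g t = poly P t" and "infinite {t. g t = 0}"
  shows "g t = 0"
proof -
  have "P = 0" using assms poly_roots_finite[of P] by auto
  then show ?thesis using assms by simp
qed

lemma holds_sgn: "sgn v = sgn w \<Longrightarrow> holds_rel r v = holds_rel r (w::real)"
  by (cases r) (auto simp: sgn_if split: if_splits)

lemma my_disj: "x \<noteq> y \<Longrightarrow> x = y \<or> Q \<Longrightarrow> Q" by blast

lemma boundary:
  assumes polys: "\<forall>C\<in>set F. \<forall>(f, r)\<in>set C. poly_fun3 f"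
    and S: "S = {x. \<exists>C\<in>set F. \<forall>(f, r)\<in>set C. holds_rel r (f x)}"
    and p: "p \<in> S" and out: "\<forall>t>0. p - t *\<^sub>R d \<notin> S"
  shows "\<exists>C\<in>set F. \<exists>(f, r)\<in>set C. f p = 0 \<and> \<not>(\<forall>t. f (p + t *\<^sub>R d) = 0)"
proof (rule ccontr)
  assume H: "\<not> ?thesis"
  define A where "A = (\<Union>C\<in>set F. set C)"
  have fin: "finite A" unfolding A_def by simp
  have ev: "\<forall>fr\<in>A. eventually (\<lambda>t. sgn (fst fr (p + t *\<^sub>R d)) = sgn (fst fr p)) (at 0)"
  proof
    fix fr assume fr: "fr \<in> A"
    obtain f r where fr_eq: "fr = (f, r)" by (cases fr)
    have pf: "poly_fun3 f" using fr polys unfolding A_def fr_eq by auto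
    have alt: "f p \<noteq> 0 \<or> (\<forall>t. f (p + t *\<^sub>R d) = 0)" using H fr unfolding A_def fr_eq by auto
    obtain P where P: "\<forall>t. f (p + t *\<^sub>R d) = poly P t" using poly_line[OF pf] by blast
    have P0: "poly P 0 = f p" using P[rule_format, of 0] by simp
    have lim: "((\<lambda>t. f (p + t *\<^sub>R d)) \<longlongrightarrow> f p) (at 0)"
      using poly_isCont[where x="0::real" and p=P] unfolding isCont_def P0[symmetric] by (simp add: P)
    show "eventually (\<lambda>t. sgn (fst fr (p + t *\<^sub>R d)) = sgn (fst fr p)) (at 0)"
    proof (cases "\<forall>t. f (p + t *\<^sub>R d) = 0")
      case True
      then have "f p = 0" using P0 P by (metis scale_zero_left add.right_neutral)
      then show ?thesis using True by (simp add: fr_eq)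
    next
      case False
      then have nz: "f p \<noteq> 0" using alt by auto
      show ?thesis
      proof (cases "f p > 0")
        case True
        have "eventually (\<lambda>t. f (p + t *\<^sub>R d) > 0) (at 0)"
          using order_tendstoD(1)[OF lim True] .
        then show ?thesis by (rule eventually_mono) (simp add: fr_eq True)
      next
        case False
        then have neg: "f p < 0" using nz by simp
        have "eventually (\<lambda>t. f (p + t *\<^sub>R d) < 0) (at 0)"
          using order_tendstoD(2)[OF lim neg] .
        then show ?thesis by (rule eventually_mono) (simp add: fr_eq neg)
      qed
    qed
  qed
  have "eventually (\<lambda>t. \<forall>fr\<in>A. sgn (fst fr (p + t *\<^sub>R d)) = sgn (fst fr p)) (at 0)"
    using eventually_ball_finite[OF fin ev] .
  then have e1: "eventually (\<lambda>t. \<forall>fr\<in>A. sgn (fst fr (p + t *\<^sub>R d)) = sgn (fst fr p)) (at_left 0)"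
    by (simp add: eventually_at_split)
  have e2: "eventually (\<lambda>t. t \<in> {-1<..<0}) (at_left (0::real))"
    by (rule eventually_at_left_real) simp
  have e3: "eventually (\<lambda>t. t < 0 \<and> (\<forall>fr\<in>A. sgn (fst fr (p + t *\<^sub>R d)) = sgn (fst fr p))) (at_left 0)"
    using e1 e2 by eventually_elim auto
  have "\<exists>t. t < 0 \<and> (\<forall>fr\<in>A. sgn (fst fr (p + t *\<^sub>R d)) = sgn (fst fr p))"
  proof -
    have "at_left (0::real) \<noteq> bot" by (rule trivial_limit_at_left_real)
    moreover have "at_left (0::real) = bot \<or> (\<exists>t. t < 0 \<and> (\<forall>fr\<in>A. sgn (fst fr (p + t *\<^sub>R d)) = sgn (fst fr p)))"
      by (rule eventually_happens[OF e3])
    ultimately show ?thesis by (rule my_disj)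
  qed
  then obtain t where t: "t < 0" and tA: "\<forall>fr\<in>A. sgn (fst fr (p + t *\<^sub>R d)) = sgn (fst fr p)"
    by blast
  have "p + t *\<^sub>R d \<in> S"
  proof -
    obtain C where C: "C \<in> set F" "\<forall>(f, r)\<in>set C. holds_rel r (f p)" using p S by auto
    have "\<forall>(f, r)\<in>set C. holds_rel r (f (p + t *\<^sub>R d))"
    proof (intro ballI, clarify)
      fix f r assume fr: "(f, r) \<in> set C"
      then have "(f, r) \<in> A" using C unfolding A_def by auto
      from tA[rule_format, OF this] have sg: "sgn (f (p + t *\<^sub>R d)) = sgn (f p)" by simp
      have "holds_rel r (f p)" using C(2) fr by auto
      then show "holds_rel r (f (p + t *\<^sub>R d))" using holds_sgn[OF sg, of r] by simp
    qed
    then show ?thesis using C(1) unfolding S by blast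
  qed
  moreover have "p + t *\<^sub>R d = p - (-t) *\<^sub>R d" by simp
  moreover have "p - (-t) *\<^sub>R d \<notin> S" using t by (intro out[rule_format]) simp
  ultimately show False by (simp only:)
qed

lemma z_inf:
  fixes c :: real and K :: "nat set"
  assumes K: "infinite K"
  shows "infinite ((\<lambda>n. (2^n + 2*3^n*c)/5^n) ` K)"
proof
  define g where "g = (\<lambda>n::nat. (2^n + 2*3^n*c)/(5::real)^n)"
  assume "finite ((\<lambda>n. (2^n + 2*3^n*c)/5^n) ` K)"
  then have fin: "finite (g ` K)" unfolding g_def .
  have sub: "K \<subseteq> (\<Union>v\<in>g ` K. {n\<in>K. g n = v})" by auto
  have "\<not> (\<forall>v\<in>g ` K. finite {n\<in>K. g n = v})"
  proof
    assume "\<forall>v\<in>g ` K. finite {n\<in>K. g n = v}"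
    then have "finite (\<Union>v\<in>g ` K. {n\<in>K. g n = v})" using fin by blast
    then show False using sub K finite_subset by blast
  qed
  then obtain v where Kv: "infinite {n\<in>K. g n = v}" by blast
  have eq: "2^n + 2*3^n*c = v * 5^n" if "n \<in> {n\<in>K. g n = v}" for n
    using that unfolding g_def by (auto simp: field_simps)
  show False
  proof (cases "v = 0")
    case True
    obtain n1 where n1: "n1 \<in> {n\<in>K. g n = v}" using Kv by (metis infinite_imp_nonempty ex_in_conv)
    obtain n2 where n2: "n2 \<ge> Suc n1" "n2 \<in> {n\<in>K. g n = v}"
      using Kv unfolding infinite_nat_iff_unbounded_le by blast
    have pw: "(2/3)^n = -2*c" if "n \<in> {n\<in>K. g n = v}" for n
    proof -
      have "(2::real)^n + 2*3^n*c = 0" using eq[OF that] True by simp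
      then have "(2::real)^n = -2*c*3^n" by (simp add: algebra_simps add_eq_0_iff2)
      then show ?thesis by (simp add: power_divide field_simps)
    qed
    have "(2/3::real)^n2 < (2/3)^n1" by (rule power_strict_decreasing) (use n2 in auto)
    then show False using pw[OF n1] pw[OF n2(2)] by simp
  next
    case False
    have "1 < (5/3::real)" by simp
    then obtain N where N: "(1 + 2*\<bar>c\<bar>)/\<bar>v\<bar> < (5/3::real)^N" using real_arch_pow by blast
    obtain n where n: "n \<ge> N" "n \<in> {n\<in>K. g n = v}"
      using Kv unfolding infinite_nat_iff_unbounded_le by blast
    have "(5/3::real)^N \<le> (5/3)^n" by (rule power_increasing) (use n in auto)
    with N have "(1 + 2*\<bar>c\<bar>)/\<bar>v\<bar> < 5^n/3^n" by (simp add: power_divide)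
    then have lt: "(1 + 2*\<bar>c\<bar>) * 3^n < \<bar>v\<bar> * 5^n" using False by (simp add: field_simps)
    have "\<bar>v\<bar> * 5^n = \<bar>2^n + 2*3^n*c\<bar>" using eq[OF n(2)] by (simp add: abs_mult)
    also have "\<dots> \<le> 2^n + 2*3^n*\<bar>c\<bar>" by (simp add: abs_mult abs_triangle_ineq[THEN order_trans])
    also have "\<dots> \<le> 3^n + 2*3^n*\<bar>c\<bar>" using power_mono[of "2::real" 3 n] by simp
    also have "\<dots> = (1 + 2*\<bar>c\<bar>) * 3^n" by (simp add: distrib_right)
    finally show False using lt by linarith
  qed
qed


lemma qv1: "qv k $ 1 = 1" by (simp add: qv_def)
lemma Ed1: "Ed k s $ 1 = 1" by (simp add: Ed_def qv1)

theorem proposition3: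
  shows "\<not> semialgebraic3 NT"
proof
  assume "semialgebraic3 NT"
  then obtain F where polys: "\<forall>C\<in>set F. \<forall>(f, r)\<in>set C. poly_fun3 f"
    and S: "NT = {x. \<exists>C\<in>set F. \<forall>(f, r)\<in>set C. holds_rel r (f x)}"
    unfolding semialgebraic3_def by blast
  define PF where "PF = (\<Union>C\<in>set F. fst ` set C)"
  have finPF: "finite PF" unfolding PF_def by simp
  have pPF: "poly_fun3 f" if "f \<in> PF" for f
    using that polys unfolding PF_def by fastforce
  have stepA: "\<exists>f\<in>PF. f (Ed k s) = 0 \<and> \<not>(\<forall>t. f (Ed k s + t *\<^sub>R e3) = 0)"
    if "0 < s" "s < 1" for k s
  proof -
    have "Ed k s \<in> NT" using that by (intro Ed_in) auto
    moreover have "\<forall>t>0. Ed k s - t *\<^sub>R e3 \<notin> NT" using Ed_out by blast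
    ultimately have "\<exists>C\<in>set F. \<exists>(f, r)\<in>set C. f (Ed k s) = 0 \<and> \<not>(\<forall>t. f (Ed k s + t *\<^sub>R e3) = 0)"
      by (rule boundary[OF polys S])
    then obtain C f r where "C \<in> set F" "(f, r) \<in> set C"
      "f (Ed k s) = 0" "\<not>(\<forall>t. f (Ed k s + t *\<^sub>R e3) = 0)" by blast
    moreover then have "f \<in> PF" unfolding PF_def by force
    ultimately show ?thesis by blast
  qed
  define H where "H (f::real^3 \<Rightarrow> real) k \<longleftrightarrow> (\<forall>s. f (Ed k s) = 0) \<and> (\<exists>s. \<not>(\<forall>t. f (Ed k s + t *\<^sub>R e3) = 0))"
    for f k
  have stepB: "\<exists>f\<in>PF. H f k" for k
  proof -
    define G where "G (f::real^3 \<Rightarrow> real) = {s. 0 < s \<and> s < 1 \<and> f (Ed k s) = 0 \<and> \<not>(\<forall>t. f (Ed k s + t *\<^sub>R e3) = 0)}" for f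
    have sub: "{0<..<(1::real)} \<subseteq> (\<Union>f\<in>PF. G f)" using stepA unfolding G_def by fastforce
    have "\<not> (\<forall>f\<in>PF. finite (G f))"
    proof
      assume "\<forall>f\<in>PF. finite (G f)"
      then have "finite (\<Union>f\<in>PF. G f)" using finPF by blast
      then have "finite {0<..<(1::real)}" using sub finite_subset by blast
      then show False using infinite_Ioo_iff[of "0::real" 1] by simp
    qed
    then obtain f where f: "f \<in> PF" "infinite (G f)" by blast
    obtain P where P: "\<forall>s. f (qv k + s *\<^sub>R (qv (Suc k) - qv k)) = poly P s"
      using poly_line[OF pPF[OF f(1)]] by blast
    have "G f \<subseteq> {s. f (Ed k s) = 0}" unfolding G_def by auto
    then have "infinite {s. f (qv k + s *\<^sub>R (qv (Suc k) - qv k)) = 0}"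
      using f(2) finite_subset unfolding Ed_def by blast
    then have z: "\<forall>s. f (Ed k s) = 0" using poly_zero[OF P] unfolding Ed_def by blast
    obtain s where "s \<in> G f" using f(2) by (metis finite.emptyI ex_in_conv)
    then have "\<not>(\<forall>t. f (Ed k s + t *\<^sub>R e3) = 0)" unfolding G_def by blast
    then show ?thesis using z f(1) unfolding H_def by blast
  qed
  have "\<not> (\<forall>f\<in>PF. finite {k. H f k})"
  proof
    assume "\<forall>f\<in>PF. finite {k. H f k}"
    then have "finite (\<Union>f\<in>PF. {k. H f k})" using finPF by blast
    moreover have "(\<Union>f\<in>PF. {k. H f k}) = UNIV" using stepB by blast
    ultimately show False by simp
  qed
  then obtain f where f: "f \<in> PF" "infinite {k. H f k}" by blast
  define K where "K = {k. H f k}"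
  have Kinf: "infinite K" using f(2) unfolding K_def .
  obtain k0 where k0: "k0 \<in> K" using Kinf by (metis finite.emptyI ex_in_conv)
  then obtain s0 where s0: "\<not>(\<forall>t. f (Ed k0 s0 + t *\<^sub>R e3) = 0)" unfolding K_def H_def by blast
  define p0 where "p0 = Ed k0 s0"
  define c0 where "c0 = p0 $ 2"
  define zz where "zz k = - ((2^(Suc k) + 2*3^(Suc k)*c0)/5^(Suc k))" for k :: nat
  have zero: "f (p0 + (zz k - p0$3) *\<^sub>R e3) = 0" if kK: "k \<in> K" for k
  proof -
    define y where "y j = qv j $ 2" for j
    have y: "y j = -(3/4)*(2/3)^j" for j unfolding y_def qv_def by simp
    have yne: "y (Suc k) - y k \<noteq> 0" unfolding y by simp
    define s where "s = (c0 - y k) / (y (Suc k) - y k)"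
    define w where "w = Ed k s"
    have w1: "w $ 1 = 1" unfolding w_def by (rule Ed1)
    have "w $ 2 = y k + s * (y (Suc k) - y k)" unfolding w_def Ed_def y_def by simp
    also have "\<dots> = c0" using yne unfolding s_def by simp
    finally have w2: "w $ 2 = c0" .
    have "vl (Suc k) w = 0" unfolding w_def vl_Ed by (simp add: vl_q_zero1 vl_q_zero2)
    then have "2^(Suc k) + 2*3^(Suc k)*c0 + 5^(Suc k) * w$3 = 0"
      unfolding vl_def w1 w2 by simp
    then have w3: "w $ 3 = zz k" unfolding zz_def by (simp add: field_simps)
    have "w = p0 + (zz k - p0$3) *\<^sub>R e3"
      unfolding vec_eq_iff forall_3
      using w1 w2 w3 by (simp add: e3_def p0_def c0_def Ed1)
    moreover have "f w = 0" using kK unfolding K_def H_def w_def by blast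
    ultimately show ?thesis by simp
  qed
  obtain P where P: "\<forall>t. f (p0 + t *\<^sub>R e3) = poly P t"
    using poly_line[OF pPF[OF f(1)]] by blast
  define g where "g = (\<lambda>n::nat. (2^n + 2*3^n*c0)/(5::real)^n)"
  have infS: "infinite (Suc ` K)" using Kinf finite_imageD inj_Suc inj_on_subset by blast
  have "infinite (g ` Suc ` K)" using z_inf[OF infS, of c0] unfolding g_def .
  moreover have "inj (\<lambda>x. - x - p0$3)" by (rule injI) simp
  ultimately have "infinite ((\<lambda>x. - x - p0$3) ` g ` Suc ` K)"
    using finite_imageD inj_on_subset by (metis subset_UNIV)
  moreover have "(\<lambda>x. - x - p0$3) ` g ` Suc ` K \<subseteq> {t. f (p0 + t *\<^sub>R e3) = 0}"
  proof
    fix x assume "x \<in> (\<lambda>x. - x - p0$3) ` g ` Suc ` K"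
    then obtain k where k: "k \<in> K" "x = - g (Suc k) - p0$3" by blast
    have "x = zz k - p0$3" unfolding k(2) g_def zz_def by simp
    then show "x \<in> {t. f (p0 + t *\<^sub>R e3) = 0}" using zero[OF k(1)] by simp
  qed
  ultimately have "infinite {t. f (p0 + t *\<^sub>R e3) = 0}" using finite_subset by blast
  then have "\<forall>t. f (p0 + t *\<^sub>R e3) = 0" using poly_zero[OF P] by blast
  then show False using s0 unfolding p0_def by blast
qed

end
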